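(* For $k\ge 1$, rectangular reduction gives a bijection $\mathrm{red}:\mathcal M^{\circ}_{2k}\to\mathcal N_{k,0}\cup\mathcal N_{k,1}$. Consequently $M^\circ_{2k} = N_{k,0}+N_{k,1} = N_k - N_{k,2}$.
   Context: Colorings. Each square is colored water or land. Two distinct squares are adjacent if they share an edge after all edge identifications; a set of squares is connected if its induced adjacency graph is connected (empty set counts as connected). (N1): the water is connected. (N2$\circ$): no interior (non-boundary) vertex of the tiling has all of the squares incident to it water. A $2\times k$ Nurikabe rectangle is a coloring of the $2\times k$ grid (columns $1,\dots,k$ left to right, no identifications) with connected water and no $2\times 2$ block of water squares; $\mathcal N_k$ is the set of these, $N_k=|\mathcal N_k|$; $\mathcal N_{k,i}$ is the subset with exactly $i$ water squares in column $k$, $N_{k,i}=|\mathcal N_{k,i}|$. Tile $[0,n]\times[0,1]$ by unit squares $[j-1,j]\times[0,1]$, called square $j$. The $1\times n$ Möbius strip identifies $(x,1)\sim(n-x,0)$ for $x\in[0,n]$; its boundary is the image of the vertical sides. $\mathcal M^\circ_n$ is the set of colorings of the $1\times n$ Möbius strip satisfying (N1) and (N2$\circ$), $M^\circ_n=|\mathcal M^\circ_n|$. Rectangular reduction: for a coloring of the $1\times 2k$ Möbius strip, $\mathrm{red}$ gives the coloring of the $2\times k$ grid whose column $j$ ($1\le j\le k$) has top square colored as square $j$ and bottom square colored as square $2k+1-j$. *)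

theory Defs
  imports Main "HOL-Library.FuncSet"
begin

datatype color = Water | Land

definition induced_connected :: "('a \<Rightarrow> 'a \<Rightarrow> bool) \<Rightarrow> 'a set \<Rightarrow> bool" where
  "induced_connected adj S \<longleftrightarrow>
     (\<forall>x\<in>S. \<forall>y\<in>S. (x, y) \<in> {(u, v). u \<in> S \<and> v \<in> S \<and> adj u v}\<^sup>*)"

text \<open>Square j (1 <= j <= n) is [j-1,j] x [0,1].  Edges: vertical edge VE a is the
  segment {a} x [0,1]; HE s 0 / HE s 1 are the bottom / top sides of square s.
  The identification (x,1) ~ (n-x,0) maps the top side of square s onto the bottom
  side of square n+1-s; vertical edges are not identified with anything.\<close>
datatype edge = VE nat | HE nat nat

definition mob_edges_of :: "nat \<Rightarrow> edge set" where
  "mob_edges_of s = {VE (s - 1), VE s, HE s 0, HE s 1}"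

fun mob_edge_canon :: "nat \<Rightarrow> edge \<Rightarrow> edge" where
  "mob_edge_canon n (VE a) = VE a"
| "mob_edge_canon n (HE s b) = (if b = 1 then HE (n + 1 - s) 0 else HE s 0)"

definition mob_adj :: "nat \<Rightarrow> nat \<Rightarrow> nat \<Rightarrow> bool" where
  "mob_adj n i j \<longleftrightarrow> i \<in> {1..n} \<and> j \<in> {1..n} \<and> i \<noteq> j \<and>
     (\<exists>e\<in>mob_edges_of i. \<exists>e'\<in>mob_edges_of j. mob_edge_canon n e = mob_edge_canon n e')"

text \<open>Vertices: grid points (a,b) with a \<in> {0..n}, b \<in> {0,1}; (a,1) ~ (n-a,0).
  Each vertex class is represented by its point on y = 0.\<close>
definition mob_vcanon :: "nat \<Rightarrow> nat \<times> nat \<Rightarrow> nat \<times> nat" where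
  "mob_vcanon n p = (if snd p = 1 then (n - fst p, 0) else (fst p, 0))"

definition mob_points :: "nat \<Rightarrow> (nat \<times> nat) set" where
  "mob_points n = {0..n} \<times> {0, 1}"

definition mob_vertices :: "nat \<Rightarrow> (nat \<times> nat) set" where
  "mob_vertices n = mob_vcanon n ` mob_points n"

definition mob_boundary_vertex :: "nat \<Rightarrow> nat \<times> nat \<Rightarrow> bool" where
  "mob_boundary_vertex n v \<longleftrightarrow>
     (\<exists>p\<in>mob_points n. mob_vcanon n p = v \<and> (fst p = 0 \<or> fst p = n))"

definition mob_corners :: "nat \<Rightarrow> (nat \<times> nat) set" where
  "mob_corners s = {(s - 1, 0), (s, 0), (s - 1, 1), (s, 1)}"

definition mob_incident :: "nat \<Rightarrow> nat \<times> nat \<Rightarrow> nat set" where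
  "mob_incident n v = {s \<in> {1..n}. \<exists>p\<in>mob_corners s. mob_vcanon n p = v}"

definition mob_water :: "nat \<Rightarrow> (nat \<Rightarrow> color) \<Rightarrow> nat set" where
  "mob_water n f = {s \<in> {1..n}. f s = Water}"

definition Mob_circ :: "nat \<Rightarrow> (nat \<Rightarrow> color) set" where
  "Mob_circ n = {f \<in> {1..n} \<rightarrow>\<^sub>E UNIV.
      induced_connected (mob_adj n) (mob_water n f) \<and>
      (\<forall>v\<in>mob_vertices n. \<not> mob_boundary_vertex n v \<longrightarrow>
          \<not> (\<forall>s\<in>mob_incident n v. f s = Water))}"

text \<open>Squares (r, c): row r \<in> {0,1} (0 = top, 1 = bottom), column c \<in> {1..k}.\<close>
definition grid :: "nat \<Rightarrow> (nat \<times> nat) set" where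
  "grid k = {0, 1} \<times> {1..k}"

definition grid_adj :: "nat \<Rightarrow> nat \<times> nat \<Rightarrow> nat \<times> nat \<Rightarrow> bool" where
  "grid_adj k p q \<longleftrightarrow> p \<in> grid k \<and> q \<in> grid k \<and>
     ((snd p = snd q \<and> fst p \<noteq> fst q) \<or>
      (fst p = fst q \<and> (snd q = snd p + 1 \<or> snd p = snd q + 1)))"

definition grid_water :: "nat \<Rightarrow> (nat \<times> nat \<Rightarrow> color) \<Rightarrow> (nat \<times> nat) set" where
  "grid_water k g = {p \<in> grid k. g p = Water}"

definition Nurikabe :: "nat \<Rightarrow> (nat \<times> nat \<Rightarrow> color) set" where
  "Nurikabe k = {g \<in> grid k \<rightarrow>\<^sub>E UNIV.
      induced_connected (grid_adj k) (grid_water k g) \<and>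
      \<not> (\<exists>c. 1 \<le> c \<and> c + 1 \<le> k \<and>
            g (0, c) = Water \<and> g (1, c) = Water \<and>
            g (0, c + 1) = Water \<and> g (1, c + 1) = Water)}"

definition Nurikabe_i :: "nat \<Rightarrow> nat \<Rightarrow> (nat \<times> nat \<Rightarrow> color) set" where
  "Nurikabe_i k i = {g \<in> Nurikabe k. card {r \<in> {0, 1::nat}. g (r, k) = Water} = i}"

definition red :: "nat \<Rightarrow> (nat \<Rightarrow> color) \<Rightarrow> (nat \<times> nat \<Rightarrow> color)" where
  "red k f = restrict (\<lambda>(r, c). if r = 0 then f c else f (2 * k + 1 - c)) (grid k)"

end

theory Submission
  imports Defs
begin

definition phi :: "nat \<Rightarrow> nat \<times> nat \<Rightarrow> nat" where
  "phi k p = (if fst p = 0 then snd p else 2 * k + 1 - snd p)"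

definition psi :: "nat \<Rightarrow> nat \<Rightarrow> nat \<times> nat" where
  "psi k s = (if s \<le> k then (0, s) else (1, 2 * k + 1 - s))"

definition red' :: "nat \<Rightarrow> (nat \<times> nat \<Rightarrow> color) \<Rightarrow> (nat \<Rightarrow> color)" where
  "red' k g = restrict (\<lambda>s. g (psi k s)) {1..2 * k}"

lemma phi_in: "p \<in> grid k \<Longrightarrow> phi k p \<in> {1..2*k}"
  by (auto simp: grid_def phi_def)

lemma psi_in: "s \<in> {1..2*k} \<Longrightarrow> psi k s \<in> grid k"
  by (auto simp: grid_def psi_def)

lemma phi_psi: "s \<in> {1..2*k} \<Longrightarrow> phi k (psi k s) = s"
  by (auto simp: phi_def psi_def)

lemma psi_phi: "p \<in> grid k \<Longrightarrow> psi k (phi k p) = p"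
  by (auto simp: grid_def phi_def psi_def)

lemma red_eq: "red k f = restrict (\<lambda>p. f (phi k p)) (grid k)"
  unfolding red_def phi_def by (rule ext) (auto split: prod.splits)

lemma mob_adj_iff: "mob_adj n i j \<longleftrightarrow> i \<in> {1..n} \<and> j \<in> {1..n} \<and> i \<noteq> j \<and>
   (j = i + 1 \<or> i = j + 1 \<or> i + j = n + 1)"
  unfolding mob_adj_def mob_edges_of_def by auto

lemma grid_adj_iff: "p \<in> grid k \<Longrightarrow> q \<in> grid k \<Longrightarrow>
   grid_adj k p q \<longleftrightarrow> mob_adj (2*k) (phi k p) (phi k q)"
  unfolding mob_adj_iff grid_adj_def grid_def phi_def
  by (cases p; cases q) auto

lemma ic_map:
  assumes "\<forall>x\<in>S. \<forall>y\<in>S. adj x y \<longrightarrow> adj' (h x) (h y)"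
    and "induced_connected adj S"
  shows "induced_connected adj' (h ` S)"
  unfolding induced_connected_def
proof (intro ballI)
  fix x' y' assume "x' \<in> h ` S" "y' \<in> h ` S"
  then obtain x y where xy: "x \<in> S" "y \<in> S" "x' = h x" "y' = h y" by blast
  have "(x, y) \<in> {(u, v). u \<in> S \<and> v \<in> S \<and> adj u v}\<^sup>*"
    using assms(2) xy unfolding induced_connected_def by blast
  then have "(h x, h y) \<in> {(u, v). u \<in> h ` S \<and> v \<in> h ` S \<and> adj' u v}\<^sup>*"
  proof (induction rule: rtrancl_induct)
    case base then show ?case by simp
  next
    case (step y z)
    then have "(h y, h z) \<in> {(u, v). u \<in> h ` S \<and> v \<in> h ` S \<and> adj' u v}"
      using assms(1) by auto
    with step show ?case by (meson rtrancl.rtrancl_into_rtrancl)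
  qed
  then show "(x', y') \<in> {(u, v). u \<in> h ` S \<and> v \<in> h ` S \<and> adj' u v}\<^sup>*"
    using xy by simp
qed

lemma mob_vertices_eq: "mob_vertices n = (\<lambda>a. (a, 0)) ` {0..n}"
  unfolding mob_vertices_def mob_points_def mob_vcanon_def
  by (force simp: image_iff)

lemma mob_boundary_iff: "a \<le> n \<Longrightarrow> mob_boundary_vertex n (a, 0) \<longleftrightarrow> a = 0 \<or> a = n"
  unfolding mob_boundary_vertex_def mob_points_def mob_vcanon_def
  by (auto intro: bexI[of _ "(0,0)"] bexI[of _ "(n,0)"])

lemma mob_incident_eq: "1 \<le> a \<Longrightarrow> a < n \<Longrightarrow>
   mob_incident n (a, 0) = {a, a + 1, n - a, n + 1 - a}"
  unfolding mob_incident_def mob_corners_def mob_vcanon_def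
  by auto

lemma N2_iff:
  "(\<forall>v\<in>mob_vertices n. \<not> mob_boundary_vertex n v \<longrightarrow>
          \<not> (\<forall>s\<in>mob_incident n v. f s = Water)) \<longleftrightarrow>
   (\<forall>a. 1 \<le> a \<and> a < n \<longrightarrow> \<not> (f a = Water \<and> f (a + 1) = Water \<and> f (n - a) = Water \<and> f (n + 1 - a) = Water))"
  (is "?L \<longleftrightarrow> ?R")
proof
  assume L: ?L
  show ?R
  proof (intro allI impI)
    fix a assume a: "1 \<le> a \<and> a < n"
    then have "(a, 0) \<in> mob_vertices n" "\<not> mob_boundary_vertex n (a, 0)"
      using mob_vertices_eq mob_boundary_iff by auto
    with L have "\<not> (\<forall>s\<in>mob_incident n (a, 0). f s = Water)" by blast
    then show "\<not> (f a = Water \<and> f (a + 1) = Water \<and> f (n - a) = Water \<and> f (n + 1 - a) = Water)"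
      using mob_incident_eq[of a n] a by auto
  qed
next
  assume R: ?R
  show ?L
  proof (intro ballI impI)
    fix v assume v: "v \<in> mob_vertices n" "\<not> mob_boundary_vertex n v"
    then obtain a where a: "v = (a, 0)" "a \<le> n" using mob_vertices_eq by auto
    with v have "a \<noteq> 0" "a \<noteq> n" using mob_boundary_iff by auto
    with a have "1 \<le> a" "a < n" by auto
    then show "\<not> (\<forall>s\<in>mob_incident n v. f s = Water)"
      using R mob_incident_eq[of a n] a by auto
  qed
qed

lemma card01: "card {r \<in> {0, 1::nat}. P r} = (if P 0 then 1 else 0) + (if P 1 then 1 else 0)"
proof -
  have "{r \<in> {0, 1::nat}. P r} = (if P 0 then {0} else {}) \<union> (if P 1 then {1} else {})"
  proof (rule set_eqI)
    fix x :: nat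
    show "x \<in> {r \<in> {0, 1::nat}. P r} \<longleftrightarrow> x \<in> (if P 0 then {0} else {}) \<union> (if P 1 then {1} else {})"
      by (cases "x = 0"; cases "x = 1") auto
  qed
  then show ?thesis by (cases "P 0"; cases "P 1") auto
qed

lemma N2_grid_iff:
  fixes f :: "nat \<Rightarrow> color" and k :: nat
  assumes "k \<ge> 1"
  shows "(\<forall>a. 1 \<le> a \<and> a < 2*k \<longrightarrow> \<not> (f a = Water \<and> f (a + 1) = Water \<and> f (2*k - a) = Water \<and> f (2*k + 1 - a) = Water))
    \<longleftrightarrow> (\<not> (\<exists>c. 1 \<le> c \<and> c + 1 \<le> k \<and> f c = Water \<and> f (2*k+1-c) = Water \<and> f (c+1) = Water \<and> f (2*k+1-(c+1)) = Water))
        \<and> \<not> (f k = Water \<and> f (k + 1) = Water)"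
  (is "?L \<longleftrightarrow> ?R")
proof
  assume L: ?L
  have "\<not> (f k = Water \<and> f (k + 1) = Water)"
    using L[rule_format, of k] assms by (auto simp: mult_2)
  moreover have "\<not> (\<exists>c. 1 \<le> c \<and> c + 1 \<le> k \<and> f c = Water \<and> f (2*k+1-c) = Water \<and> f (c+1) = Water \<and> f (2*k+1-(c+1)) = Water)"
  proof
    assume "\<exists>c. 1 \<le> c \<and> c + 1 \<le> k \<and> f c = Water \<and> f (2*k+1-c) = Water \<and> f (c+1) = Water \<and> f (2*k+1-(c+1)) = Water"
    then obtain c where c: "1 \<le> c" "c + 1 \<le> k" "f c = Water" "f (2*k+1-c) = Water" "f (c+1) = Water" "f (2*k+1-(c+1)) = Water" by blast
    have "2*k+1-(c+1) = 2*k - c" by simp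
    with c L[rule_format, of c] show False by auto
  qed
  ultimately show ?R by blast
next
  assume R: ?R
  show ?L
  proof (intro allI impI notI)
    fix a assume a: "1 \<le> a \<and> a < 2*k" and W: "f a = Water \<and> f (a + 1) = Water \<and> f (2*k - a) = Water \<and> f (2*k + 1 - a) = Water"
    consider "a < k" | "a = k" | "a > k" by linarith
    then show False
    proof cases
      case 1
      have "2*k+1-(a+1) = 2*k - a" by simp
      with R a W 1 show False by fastforce
    next
      case 2
      with R W show False by (simp add: mult_2)
    next
      case 3
      define c where "c = 2*k - a"
      have e: "2*k+1-c = a+1" "c + 1 = 2*k+1-a" "2*k+1-(c+1) = a" "1 \<le> c" "c + 1 \<le> k"
        using 3 a unfolding c_def by auto
      have "f c = Water" using W c_def by simp
      with e R W show False by metis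
    qed
  qed
qed

lemma red_apply: "p \<in> grid k \<Longrightarrow> red k f p = f (phi k p)"
  by (simp add: red_eq)

lemma water_phi: "mob_water (2*k) f = phi k ` grid_water k (red k f)"
proof (rule set_eqI)
  fix s show "s \<in> mob_water (2*k) f \<longleftrightarrow> s \<in> phi k ` grid_water k (red k f)"
  proof
    assume "s \<in> mob_water (2*k) f"
    then have s: "s \<in> {1..2*k}" "f s = Water" by (auto simp: mob_water_def)
    have g: "psi k s \<in> grid k" by (rule psi_in[OF s(1)])
    have "red k f (psi k s) = Water" using red_apply[OF g, of f] phi_psi[OF s(1)] s(2) by simp
    with g have "psi k s \<in> grid_water k (red k f)" by (simp add: grid_water_def)
    moreover have "s = phi k (psi k s)" using phi_psi[OF s(1)] by simp
    ultimately show "s \<in> phi k ` grid_water k (red k f)" by (rule rev_image_eqI)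
  next
    assume "s \<in> phi k ` grid_water k (red k f)"
    then obtain p where p: "p \<in> grid k" "red k f p = Water" "s = phi k p"
      by (auto simp: grid_water_def)
    have "f s = Water" using p red_apply[OF p(1), of f] by simp
    moreover have "s \<in> {1..2*k}" using p phi_in by blast
    ultimately show "s \<in> mob_water (2*k) f" by (simp add: mob_water_def)
  qed
qed

lemma water_psi: "grid_water k (red k f) = psi k ` mob_water (2*k) f"
proof -
  have "psi k ` mob_water (2*k) f = (\<lambda>p. psi k (phi k p)) ` grid_water k (red k f)"
    by (simp add: water_phi image_image)
  also have "\<dots> = (\<lambda>p. p) ` grid_water k (red k f)"
    by (rule image_cong) (auto simp: grid_water_def psi_phi)
  finally show ?thesis by simp
qed

lemma conn_iff:
  "induced_connected (mob_adj (2*k)) (mob_water (2*k) f) \<longleftrightarrow>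
   induced_connected (grid_adj k) (grid_water k (red k f))"
proof
  assume A: "induced_connected (mob_adj (2*k)) (mob_water (2*k) f)"
  have "\<forall>x\<in>mob_water (2*k) f. \<forall>y\<in>mob_water (2*k) f. mob_adj (2*k) x y \<longrightarrow> grid_adj k (psi k x) (psi k y)"
    using grid_adj_iff psi_in phi_psi by (auto simp: mob_water_def)
  from ic_map[where h="psi k", OF this A] show "induced_connected (grid_adj k) (grid_water k (red k f))"
    by (simp add: water_psi)
next
  assume A: "induced_connected (grid_adj k) (grid_water k (red k f))"
  have "\<forall>x\<in>grid_water k (red k f). \<forall>y\<in>grid_water k (red k f). grid_adj k x y \<longrightarrow> mob_adj (2*k) (phi k x) (phi k y)"
    using grid_adj_iff by (auto simp: grid_water_def)
  from ic_map[where h="phi k", OF this A] show "induced_connected (mob_adj (2*k)) (mob_water (2*k) f)"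
    by (simp add: water_phi)
qed

lemma red_top: "1 \<le> c \<Longrightarrow> c \<le> k \<Longrightarrow> red k f (0, c) = f c"
  by (simp add: red_apply grid_def phi_def)

lemma red_bot: "1 \<le> c \<Longrightarrow> c \<le> k \<Longrightarrow> red k f (1, c) = f (2*k+1-c)"
  by (simp add: red_apply grid_def phi_def)

lemma key:
  fixes f :: "nat \<Rightarrow> color" and k :: nat
  assumes k: "k \<ge> 1" and f: "f \<in> {1..2*k} \<rightarrow>\<^sub>E UNIV"
  shows "f \<in> Mob_circ (2*k) \<longleftrightarrow> red k f \<in> Nurikabe_i k 0 \<union> Nurikabe_i k 1"
proof -
  have ext: "red k f \<in> grid k \<rightarrow>\<^sub>E UNIV" by (simp add: red_def)
  have blk: "(\<exists>c. 1 \<le> c \<and> c + 1 \<le> k \<and>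
            red k f (0, c) = Water \<and> red k f (1, c) = Water \<and>
            red k f (0, c + 1) = Water \<and> red k f (1, c + 1) = Water) \<longleftrightarrow>
     (\<exists>c. 1 \<le> c \<and> c + 1 \<le> k \<and> f c = Water \<and> f (2*k+1-c) = Water \<and> f (c+1) = Water \<and> f (2*k+1-(c+1)) = Water)"
  proof -
    have "\<And>c. 1 \<le> c \<Longrightarrow> c + 1 \<le> k \<Longrightarrow> red k f (0, c) = f c \<and> red k f (1, c) = f (2*k+1-c) \<and>
       red k f (0, c+1) = f (c+1) \<and> red k f (1, c+1) = f (2*k+1-(c+1))"
      using red_top red_bot by simp
    then show ?thesis by metis
  qed
  have cardk: "card {r \<in> {0, 1::nat}. red k f (r, k) = Water} =
     (if f k = Water then 1 else 0) + (if f (k+1) = Water then 1 else 0)"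
    using card01[of "\<lambda>r. red k f (r, k) = Water"] red_top[of k k f] red_bot[of k k f] k
    by (simp add: mult_2)
  have c01: "red k f \<in> Nurikabe_i k 0 \<union> Nurikabe_i k 1 \<longleftrightarrow>
     red k f \<in> Nurikabe k \<and> \<not> (f k = Water \<and> f (k + 1) = Water)"
    unfolding Nurikabe_i_def Un_iff mem_Collect_eq cardk by auto
  have N2: "(\<forall>v\<in>mob_vertices (2*k). \<not> mob_boundary_vertex (2*k) v \<longrightarrow>
          \<not> (\<forall>s\<in>mob_incident (2*k) v. f s = Water)) \<longleftrightarrow>
      (\<not> (\<exists>c. 1 \<le> c \<and> c + 1 \<le> k \<and> f c = Water \<and> f (2*k+1-c) = Water \<and> f (c+1) = Water \<and> f (2*k+1-(c+1)) = Water))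
        \<and> \<not> (f k = Water \<and> f (k + 1) = Water)"
    using N2_iff[of "2*k" f] N2_grid_iff[OF k, of f] by simp
  have M: "f \<in> Mob_circ (2*k) \<longleftrightarrow> induced_connected (mob_adj (2*k)) (mob_water (2*k) f) \<and>
      (\<forall>v\<in>mob_vertices (2*k). \<not> mob_boundary_vertex (2*k) v \<longrightarrow>
          \<not> (\<forall>s\<in>mob_incident (2*k) v. f s = Water))"
    using f unfolding Mob_circ_def by blast
  have NN: "red k f \<in> Nurikabe k \<longleftrightarrow> induced_connected (grid_adj k) (grid_water k (red k f)) \<and>
      \<not> (\<exists>c. 1 \<le> c \<and> c + 1 \<le> k \<and>
            red k f (0, c) = Water \<and> red k f (1, c) = Water \<and>
            red k f (0, c + 1) = Water \<and> red k f (1, c + 1) = Water)"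
    using ext unfolding Nurikabe_def by blast
  show ?thesis
    unfolding c01 M NN blk N2 conn_iff[of k f] by blast
qed

lemma finite_color: "finite (UNIV :: color set)"
proof -
  have eq: "UNIV = {Water, Land}"
  proof (rule set_eqI)
    fix x :: color show "x \<in> UNIV \<longleftrightarrow> x \<in> {Water, Land}" by (cases x) simp_all
  qed
  show ?thesis by (subst eq) simp
qed

lemma finite_Nurikabe: "finite (Nurikabe k)"
proof -
  have "finite (grid k)" by (simp add: grid_def)
  then have "finite (grid k \<rightarrow>\<^sub>E (UNIV :: color set))" using finite_color by (rule finite_PiE)
  moreover have "Nurikabe k \<subseteq> grid k \<rightarrow>\<^sub>E (UNIV :: color set)" unfolding Nurikabe_def by blast
  ultimately show ?thesis by (rule finite_subset[rotated])
qed

lemma Nurikabe_split: "Nurikabe k = Nurikabe_i k 0 \<union> Nurikabe_i k 1 \<union> Nurikabe_i k 2"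
proof (rule set_eqI)
  fix g
  have "card {r \<in> {0, 1::nat}. g (r, k) = Water} \<le> 2"
    unfolding card01 by simp
  then have "card {r \<in> {0, 1::nat}. g (r, k) = Water} = 0 \<or> card {r \<in> {0, 1::nat}. g (r, k) = Water} = 1
     \<or> card {r \<in> {0, 1::nat}. g (r, k) = Water} = 2" by linarith
  then show "g \<in> Nurikabe k \<longleftrightarrow> g \<in> Nurikabe_i k 0 \<union> Nurikabe_i k 1 \<union> Nurikabe_i k 2"
    unfolding Nurikabe_i_def Un_iff mem_Collect_eq by blast
qed

theorem lemma5p1:
  fixes k :: nat
  assumes "k \<ge> 1"
  shows "bij_betw (red k) (Mob_circ (2 * k)) (Nurikabe_i k 0 \<union> Nurikabe_i k 1)
    \<and> card (Mob_circ (2 * k)) = card (Nurikabe_i k 0) + card (Nurikabe_i k 1)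
    \<and> card (Mob_circ (2 * k)) = card (Nurikabe k) - card (Nurikabe_i k 2)"
proof -
  have MobE: "f \<in> {1..2*k} \<rightarrow>\<^sub>E UNIV" if "f \<in> Mob_circ (2*k)" for f
    using that by (simp add: Mob_circ_def)
  have NE: "g \<in> grid k \<rightarrow>\<^sub>E UNIV" if "g \<in> Nurikabe_i k 0 \<union> Nurikabe_i k 1" for g
    using that by (auto simp: Nurikabe_i_def Nurikabe_def)
  have inv1: "red' k (red k f) = f" if "f \<in> {1..2*k} \<rightarrow>\<^sub>E UNIV" for f
  proof (rule ext)
    fix s show "red' k (red k f) s = f s"
    proof (cases "s \<in> {1..2*k}")
      case True
      then show ?thesis by (simp add: red'_def red_apply[OF psi_in[OF True]] phi_psi[OF True])
    next
      case False
      then show ?thesis using PiE_arb[OF that False] False by (auto simp: red'_def)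
    qed
  qed
  have inv2: "red k (red' k g) = g" if "g \<in> grid k \<rightarrow>\<^sub>E UNIV" for g
  proof (rule ext)
    fix p show "red k (red' k g) p = g p"
    proof (cases "p \<in> grid k")
      case True
      then show ?thesis using phi_in[OF True] by (simp add: red'_def red_apply[OF True] psi_phi[OF True])
    next
      case False
      then show ?thesis using PiE_arb[OF that False] False by (auto simp: red_def)
    qed
  qed
  have bij: "bij_betw (red k) (Mob_circ (2 * k)) (Nurikabe_i k 0 \<union> Nurikabe_i k 1)"
  proof (rule bij_betw_byWitness[where f'="red' k"])
    show "\<forall>a\<in>Mob_circ (2 * k). red' k (red k a) = a" using inv1 MobE by blast
    show "\<forall>a'\<in>Nurikabe_i k 0 \<union> Nurikabe_i k 1. red k (red' k a') = a'" using inv2 NE by blast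
    show "red k ` Mob_circ (2 * k) \<subseteq> Nurikabe_i k 0 \<union> Nurikabe_i k 1"
      using key[OF assms] MobE by blast
    show "red' k ` (Nurikabe_i k 0 \<union> Nurikabe_i k 1) \<subseteq> Mob_circ (2 * k)"
    proof
      fix f assume "f \<in> red' k ` (Nurikabe_i k 0 \<union> Nurikabe_i k 1)"
      then obtain g where g: "g \<in> Nurikabe_i k 0 \<union> Nurikabe_i k 1" "f = red' k g" by blast
      have fE: "f \<in> {1..2*k} \<rightarrow>\<^sub>E UNIV" using g(2) by (simp add: red'_def)
      have "red k f = g" using g inv2 NE by blast
      with g(1) key[OF assms fE] show "f \<in> Mob_circ (2*k)" by simp
    qed
  qed
  have fin: "finite (Nurikabe_i k i)" for i
    using finite_Nurikabe by (rule rev_finite_subset) (auto simp: Nurikabe_i_def)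
  have disj: "i \<noteq> j \<Longrightarrow> Nurikabe_i k i \<inter> Nurikabe_i k j = {}" for i j
    by (auto simp: Nurikabe_i_def)
  have c1: "card (Mob_circ (2 * k)) = card (Nurikabe_i k 0) + card (Nurikabe_i k 1)"
    using bij_betw_same_card[OF bij] card_Un_disjoint[OF fin fin disj[of 0 1]] by simp
  have d2: "(Nurikabe_i k 0 \<union> Nurikabe_i k 1) \<inter> Nurikabe_i k 2 = {}"
    using disj[of 0 2] disj[of 1 2] by auto
  have "card (Nurikabe k) = card (Nurikabe_i k 0 \<union> Nurikabe_i k 1) + card (Nurikabe_i k 2)"
    unfolding Nurikabe_split[of k]
    by (rule card_Un_disjoint[OF finite_UnI[OF fin fin] fin d2])
  then have "card (Nurikabe k) = card (Nurikabe_i k 0) + card (Nurikabe_i k 1) + card (Nurikabe_i k 2)"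
    using card_Un_disjoint[OF fin fin disj[of 0 1]] by simp
  with bij c1 show ?thesis by simp
qed

end
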